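(* Let $n,r$ be integers with $n\ge r+2\ge 2$. There is a constant $C>0$ such that for all $v,w\in F_r=F(t_1,\dots,t_r)$ and all $i\in\{1,\dots,n-1\}$ such that either $v\in[F_r,F_r]$ or $i\in\{r+1,\dots,n-1\}$, we have $$\mathrm{Area}\Big(\big[w(X^{(i)}),v(\Delta)\big]\,\big[w(\Delta),v(\Delta)\big]^{-1}\Big)\le C\cdot\max\{|w|^2,|v|^2\}.$$
   Context: For $\alpha\in\{1,\dots,n\}$ let $F^{(\alpha)}$ be the free group on $a^{(\alpha)}_1,\dots,a^{(\alpha)}_r$, let $\psi\colon F^{(1)}\times\cdots\times F^{(n)}\to\mathbb Z^r$ send each $a^{(\alpha)}_j$ to $e_j$, and $K=\ker\psi$. For $\alpha\in\{1,\dots,n-1\}$, $j\in\{1,\dots,r\}$, $x^{(\alpha)}_j=a^{(\alpha)}_j(a^{(n)}_j)^{-1}$; $X^{(\alpha)}=(x^{(\alpha)}_1,\dots,x^{(\alpha)}_r)$; $X$ is the set of all $x^{(\alpha)}_j$ and $F(X)$ the abstract free group on it; $\Delta=(x^{(1)}_1,\dots,x^{(r)}_r)$. For $w\in F_r$ and a tuple $S=(s_1,\dots,s_r)$ in $F(X)$, $w(S)$ is the image of $w$ under $t_i\mapsto s_i$; $|w|$ is word length in $F_r$. $[g,h]=ghg^{-1}h^{-1}$. Let $\mathcal R=\mathcal R_1\cup\mathcal R_2$ with $\mathcal R_1=\{[x^{(\alpha)}_i,x^{(\beta)}_i]:\alpha\ne\beta\}$, $\mathcal R_2=\{[x^{(\alpha)}_i,x^{(\beta)}_j(x^{(\gamma)}_j)^{-1}]: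 i\neq j,\ \alpha,\beta,\gamma\in\{1,\dots,n-1\}\text{ pairwise distinct}\}$ (defining relators of $K$ on $X$). $\mathrm{Area}(u)$ for $u\in F(X)$ is the least number of conjugates of elements of $\mathcal R^{\pm1}$ whose product equals $u$ in $F(X)$. *)

theory Defs
  imports Main "HOL-Library.Extended_Real"
begin

text \<open>A letter is a generator together with a flag; (a, False) is a and (a, True) is a^-1.
  Elements of the free group on a set A are the freely reduced words with letters over A.\<close>

type_synonym 'a word = "('a \<times> bool) list"

definition inv_letter :: "'a \<times> bool \<Rightarrow> 'a \<times> bool" where
  "inv_letter l = (fst l, \<not> snd l)"

fun reduced :: "'a word \<Rightarrow> bool" where
  "reduced [] = True"
| "reduced [l] = True"
| "reduced (l # m # w) = (m \<noteq> inv_letter l \<and> reduced (m # w))"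

definition red_cons :: "'a \<times> bool \<Rightarrow> 'a word \<Rightarrow> 'a word" where
  "red_cons l w = (case w of [] \<Rightarrow> [l] | m # w' \<Rightarrow> (if m = inv_letter l then w' else l # w))"

definition reduce :: "'a word \<Rightarrow> 'a word" where
  "reduce w = foldr red_cons w []"

definition fg_mult :: "'a word \<Rightarrow> 'a word \<Rightarrow> 'a word" where
  "fg_mult u v = reduce (u @ v)"

definition fg_inv :: "'a word \<Rightarrow> 'a word" where
  "fg_inv w = rev (map inv_letter w)"

definition fg_comm :: "'a word \<Rightarrow> 'a word \<Rightarrow> 'a word" where
  "fg_comm g h = reduce (g @ h @ fg_inv g @ fg_inv h)"

definition letters :: "'a word \<Rightarrow> 'a set" where
  "letters w = fst ` set w"

definition in_free :: "'a set \<Rightarrow> 'a word \<Rightarrow> bool" where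
  "in_free A w \<longleftrightarrow> reduced w \<and> letters w \<subseteq> A"

text \<open>F_r = F(t_1,...,t_r): generators are the naturals 1..r. Word length |w| is the
  length of the reduced word.\<close>
definition Fr :: "nat \<Rightarrow> nat word set" where
  "Fr r = {w. in_free {1..r} w}"

text \<open>w(S): image of w under the homomorphism t_i \<mapsto> S i.\<close>
definition subst :: "(nat \<Rightarrow> 'b word) \<Rightarrow> nat word \<Rightarrow> 'b word" where
  "subst S w = reduce (concat (map (\<lambda>(i, b). if b then fg_inv (S i) else S i) w))"

inductive_set comm_subgroup :: "nat \<Rightarrow> nat word set" for r where
  one: "[] \<in> comm_subgroup r"
| comm: "g \<in> Fr r \<Longrightarrow> h \<in> Fr r \<Longrightarrow> fg_comm g h \<in> comm_subgroup r"
| mult: "a \<in> comm_subgroup r \<Longrightarrow> b \<in> comm_subgroup r \<Longrightarrow> fg_mult a b \<in> comm_subgroup r"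
| inv: "a \<in> comm_subgroup r \<Longrightarrow> fg_inv a \<in> comm_subgroup r"

text \<open>x^(alpha)_j is encoded as the generator (alpha, j), alpha \<in> {1..n-1}, j \<in> {1..r}.\<close>
definition Xgens :: "nat \<Rightarrow> nat \<Rightarrow> (nat \<times> nat) set" where
  "Xgens n r = {1..n-1} \<times> {1..r}"

definition xg :: "nat \<Rightarrow> nat \<Rightarrow> (nat \<times> nat) word" where
  "xg \<alpha> j = [((\<alpha>, j), False)]"

definition Xtuple :: "nat \<Rightarrow> nat \<Rightarrow> (nat \<times> nat) word" where
  "Xtuple \<alpha> j = xg \<alpha> j"

definition Delta :: "nat \<Rightarrow> (nat \<times> nat) word" where
  "Delta j = xg j j"

definition R1 :: "nat \<Rightarrow> nat \<Rightarrow> (nat \<times> nat) word set" where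
  "R1 n r = {fg_comm (xg \<alpha> i) (xg \<beta> i) | \<alpha> \<beta> i.
     \<alpha> \<in> {1..n-1} \<and> \<beta> \<in> {1..n-1} \<and> i \<in> {1..r} \<and> \<alpha> \<noteq> \<beta>}"

definition R2 :: "nat \<Rightarrow> nat \<Rightarrow> (nat \<times> nat) word set" where
  "R2 n r = {fg_comm (xg \<alpha> i) (fg_mult (xg \<beta> j) (fg_inv (xg \<gamma> j))) | \<alpha> \<beta> \<gamma> i j.
     \<alpha> \<in> {1..n-1} \<and> \<beta> \<in> {1..n-1} \<and> \<gamma> \<in> {1..n-1} \<and> i \<in> {1..r} \<and> j \<in> {1..r} \<and>
     i \<noteq> j \<and> \<alpha> \<noteq> \<beta> \<and> \<alpha> \<noteq> \<gamma> \<and> \<beta> \<noteq> \<gamma>}"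

definition Rel :: "nat \<Rightarrow> nat \<Rightarrow> (nat \<times> nat) word set" where
  "Rel n r = R1 n r \<union> R2 n r"

definition area_witness :: "nat \<Rightarrow> nat \<Rightarrow> (nat \<times> nat) word \<Rightarrow>
    ((nat \<times> nat) word \<times> (nat \<times> nat) word) list \<Rightarrow> bool" where
  "area_witness n r u cs \<longleftrightarrow>
     (\<forall>(g, \<rho>) \<in> set cs. in_free (Xgens n r) g \<and> (\<rho> \<in> Rel n r \<or> \<rho> \<in> fg_inv ` Rel n r)) \<and>
     reduce (concat (map (\<lambda>(g, \<rho>). g @ \<rho> @ fg_inv g) cs)) = reduce u"

definition Area :: "nat \<Rightarrow> nat \<Rightarrow> (nat \<times> nat) word \<Rightarrow> enat" where
  "Area n r u = (if \<exists>cs. area_witness n r u cs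
                 then enat (LEAST N. \<exists>cs. area_witness n r u cs \<and> length cs = N)
                 else \<infinity>)"

end

theory Submission
  imports Defs
begin


lemma inv_inv_letter[simp]: "inv_letter (inv_letter l) = l"
  by (cases l) (simp add: inv_letter_def)

lemma fg_inv_inv[simp]: "fg_inv (fg_inv w) = w"
  by (simp add: fg_inv_def rev_map comp_def)

lemma fg_inv_append[simp]: "fg_inv (a @ b) = fg_inv b @ fg_inv a"
  by (simp add: fg_inv_def)

lemma fg_inv_Nil[simp]: "fg_inv [] = []"
  by (simp add: fg_inv_def)

lemma fg_inv_Cons: "fg_inv (l # w) = fg_inv w @ [inv_letter l]"
  by (simp add: fg_inv_def)

lemma reduce_Nil[simp]: "reduce [] = []"
  by (simp add: reduce_def)

lemma reduce_Cons: "reduce (l # w) = red_cons l (reduce w)"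
  by (simp add: reduce_def)

lemma reduce_append0: "reduce (a @ b) = foldr red_cons a (reduce b)"
  by (simp add: reduce_def)

lemma reduced_tl: "reduced (m # w) \<Longrightarrow> reduced w"
  by (cases w) auto

lemma reduced_red_cons: "reduced w \<Longrightarrow> reduced (red_cons l w)"
proof (cases w)
  case (Cons m w')
  assume "reduced w"
  then show ?thesis using Cons by (auto simp: red_cons_def dest: reduced_tl)
qed (simp add: red_cons_def)

lemma reduced_foldr: "reduced s \<Longrightarrow> reduced (foldr red_cons u s)"
  by (induction u) (auto intro: reduced_red_cons)

lemma reduced_reduce[simp]: "reduced (reduce w)"
  unfolding reduce_def by (rule reduced_foldr) simp

lemma red_cons_inv: "reduced s \<Longrightarrow> red_cons l (red_cons (inv_letter l) s) = s"
proof (cases s)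
  case Nil then show ?thesis by (simp add: red_cons_def)
next
  case (Cons m s')
  assume r: "reduced s"
  show ?thesis
  proof (cases "m = l")
    case True
    then show ?thesis using Cons r
      by (cases s') (auto simp: red_cons_def)
  next
    case False
    then show ?thesis using Cons by (auto simp: red_cons_def)
  qed
qed

lemma reduce_reduced: "reduced w \<Longrightarrow> reduce w = w"
proof (induction w rule: reduced.induct)
  case 1 then show ?case by simp
next
  case (2 l) then show ?case by (simp add: reduce_Cons red_cons_def)
next
  case (3 l m w) then show ?case by (simp add: reduce_Cons red_cons_def)
qed

lemma reduce_reduce[simp]: "reduce (reduce w) = reduce w"
  by (simp add: reduce_reduced)

lemma action: "reduced s \<Longrightarrow> foldr red_cons (reduce u) s = foldr red_cons u s"
proof (induction u)
  case Nil then show ?case by simp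
next
  case (Cons l u)
  have IH: "foldr red_cons (reduce u) s = foldr red_cons u s" using Cons by simp
  show ?case
  proof (cases "reduce u")
    case Nil
    have "reduce (l # u) = [l]" using Nil by (simp add: reduce_Cons red_cons_def)
    then show ?thesis using IH Nil by simp
  next
    case (Cons m t)
    show ?thesis
    proof (cases "m = inv_letter l")
      case True
      have "red_cons l (red_cons (inv_letter l) (foldr red_cons t s)) = foldr red_cons t s"
        by (rule red_cons_inv, rule reduced_foldr, fact)
      have e: "reduce (l # u) = t" using True Cons by (simp add: reduce_Cons red_cons_def)
      have "foldr red_cons u s = red_cons (inv_letter l) (foldr red_cons t s)"
        using IH[symmetric] Cons True by simp
      then show ?thesis using e \<open>red_cons l (red_cons (inv_letter l) (foldr red_cons t s)) = foldr red_cons t s\<close> by simp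
    next
      case False
      have e: "reduce (l # u) = l # m # t" using False Cons by (simp add: reduce_Cons red_cons_def)
      show ?thesis using e IH Cons by simp
    qed
  qed
qed

lemma reduce_app_red2[simp]: "reduce (a @ reduce b) = reduce (a @ b)"
  by (simp add: reduce_append0)

lemma reduce_app_red1[simp]: "reduce (reduce a @ b) = reduce (a @ b)"
  by (simp add: reduce_append0 action)

lemma reduce_cong3:
  assumes "reduce b = reduce b'"
  shows "reduce (a @ b @ c) = reduce (a @ b' @ c)"
proof -
  have "reduce (a @ b @ c) = reduce (a @ reduce (reduce b @ c))" by simp
  also have "\<dots> = reduce (a @ reduce (reduce b' @ c))" using assms by simp
  also have "\<dots> = reduce (a @ b' @ c)" by simp
  finally show ?thesis .
qed

lemma reduce_cong2:
  assumes "reduce a = reduce a'" "reduce b = reduce b'"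
  shows "reduce (a @ b) = reduce (a' @ b')"
  using reduce_cong3[OF assms(1), of "[]" b] reduce_cong3[OF assms(2), of a' "[]"] by simp

lemma reduce_cancel_pair: "reduce [l, inv_letter l] = []"
  by (simp add: reduce_Cons red_cons_def)

lemma reduce_right_inv[simp]: "reduce (u @ fg_inv u) = []"
proof (induction u rule: rev_induct)
  case Nil then show ?case by simp
next
  case (snoc l u)
  have "reduce ((u @ [l]) @ fg_inv (u @ [l])) = reduce (u @ [l, inv_letter l] @ fg_inv u)"
    by (simp add: fg_inv_def)
  also have "\<dots> = reduce (u @ [] @ fg_inv u)"
    by (rule reduce_cong3) (simp add: reduce_cancel_pair)
  finally show ?case using snoc by simp
qed

lemma reduce_left_inv[simp]: "reduce (fg_inv u @ u) = []"
  using reduce_right_inv[of "fg_inv u"] by simp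

lemma reduce_cancel1[simp]: "reduce (a @ x @ fg_inv x @ b) = reduce (a @ b)"
  using reduce_cong3[of "x @ fg_inv x" "[]" a b] by simp
lemma reduce_cancel2[simp]: "reduce (a @ fg_inv x @ x @ b) = reduce (a @ b)"
  using reduce_cong3[of "fg_inv x @ x" "[]" a b] by simp
lemma reduce_cancel3[simp]: "reduce (x @ fg_inv x @ b) = reduce b"
  using reduce_cancel1[of "[]"] by simp
lemma reduce_cancel4[simp]: "reduce (fg_inv x @ x @ b) = reduce b"
  using reduce_cancel2[of "[]"] by simp
lemma reduce_cancel5[simp]: "reduce (a @ x @ fg_inv x) = reduce a"
  using reduce_cancel1[of a x "[]"] by simp
lemma reduce_cancel6[simp]: "reduce (a @ fg_inv x @ x) = reduce a"
  using reduce_cancel2[of a x "[]"] by simp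

lemma reduce_inv_cong:
  assumes "reduce a = reduce a'"
  shows "reduce (fg_inv a) = reduce (fg_inv a')"
proof -
  have "reduce (fg_inv a) = reduce (fg_inv a @ a' @ fg_inv a')" by simp
  also have "\<dots> = reduce (fg_inv a @ a @ fg_inv a')"
    using reduce_cong3[OF assms[symmetric], of "fg_inv a" "fg_inv a'"] .
  also have "\<dots> = reduce (fg_inv a')" by simp
  finally show ?thesis .
qed

lemma reduce_inv_red[simp]: "reduce (a @ fg_inv (reduce b) @ c) = reduce (a @ fg_inv b @ c)"
  by (rule reduce_cong3) (rule reduce_inv_cong, simp)
lemma reduce_inv_red2[simp]: "reduce (fg_inv (reduce b) @ c) = reduce (fg_inv b @ c)"
  using reduce_inv_red[of "[]"] by simp
lemma reduce_inv_red3[simp]: "reduce (a @ fg_inv (reduce b)) = reduce (a @ fg_inv b)"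
  using reduce_inv_red[of a b "[]"] by simp
lemma reduce_inv_red4[simp]: "reduce (fg_inv (reduce b)) = reduce (fg_inv b)"
  by (rule reduce_inv_cong) simp
lemma reduce_red_mid[simp]: "reduce (a @ reduce b @ c) = reduce (a @ b @ c)"
  by (rule reduce_cong3) simp

lemma letters_append[simp]: "letters (a @ b) = letters a \<union> letters b"
  by (simp add: letters_def image_Un)
lemma letters_Nil[simp]: "letters [] = {}" by (simp add: letters_def)
lemma letters_inv[simp]: "letters (fg_inv a) = letters a"
  by (force simp: letters_def fg_inv_def inv_letter_def image_iff)
lemma letters_red_cons: "letters (red_cons l w) \<subseteq> insert (fst l) (letters w)"
  by (cases w) (auto simp: red_cons_def letters_def)
lemma letters_reduce: "letters (reduce w) \<subseteq> letters w"
proof (induction w)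
  case (Cons l w)
  have "letters (l # w) = insert (fst l) (letters w)" by (simp add: letters_def)
  then show ?case
    using letters_red_cons[of l "reduce w"] Cons by (auto simp: reduce_Cons)
qed simp

lemma act_cancel1: "reduced s \<Longrightarrow> foldr red_cons x (foldr red_cons (fg_inv x) s) = s"
  using reduce_cancel3[of x s] by (simp add: reduce_append0 reduce_reduced)
lemma act_cancel2: "reduced s \<Longrightarrow> foldr red_cons (fg_inv x) (foldr red_cons x s) = s"
  using act_cancel1[of s "fg_inv x"] by simp
lemma act_inv_red: "reduced s \<Longrightarrow> foldr red_cons (fg_inv (reduce b)) s = foldr red_cons (fg_inv b) s"
  using reduce_inv_red2[of b s] by (simp add: reduce_append0 reduce_reduced)

lemma action': "reduced t \<Longrightarrow> reduced s \<Longrightarrow> foldr red_cons (foldr red_cons u t) s = foldr red_cons u (foldr red_cons t s)"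
  using action[of s "u @ t"] by (simp add: reduce_append0 reduce_reduced)
lemma act_inv_red': "reduced t \<Longrightarrow> reduced s \<Longrightarrow> foldr red_cons (fg_inv (foldr red_cons b t)) s = foldr red_cons (fg_inv t) (foldr red_cons (fg_inv b) s)"
  using act_inv_red[of s "b @ t"] by (simp add: reduce_append0 reduce_reduced)
lemma reduced_Nil: "reduced []" by simp

lemmas fgs = reduce_def foldr_append act_cancel1 act_cancel2 action' act_inv_red' reduced_foldr
  reduced_Nil fg_inv_append fg_inv_inv fg_inv_Nil foldr_Nil append_Nil append_Nil2 id_apply




context fixes n r :: nat begin

definition ok :: "(nat \<times> nat) word \<Rightarrow> bool" where
  "ok w \<longleftrightarrow> letters w \<subseteq> Xgens n r"

definition valid :: "((nat \<times> nat) word \<times> (nat \<times> nat) word) list \<Rightarrow> bool" where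
  "valid cs \<longleftrightarrow> (\<forall>(g, \<rho>) \<in> set cs. in_free (Xgens n r) g \<and> (\<rho> \<in> Rel n r \<or> \<rho> \<in> fg_inv ` Rel n r))"

definition prodc :: "((nat \<times> nat) word \<times> (nat \<times> nat) word) list \<Rightarrow> (nat \<times> nat) word" where
  "prodc cs = concat (map (\<lambda>(g, \<rho>). g @ \<rho> @ fg_inv g) cs)"

definition Dk :: "nat \<Rightarrow> (nat \<times> nat) word \<Rightarrow> bool" where
  "Dk k u \<longleftrightarrow> (\<exists>cs. length cs \<le> k \<and> valid cs \<and> reduce (prodc cs) = reduce u)"

lemma ok_app[simp]: "ok (a @ b) \<longleftrightarrow> ok a \<and> ok b"
  by (auto simp: ok_def)
lemma ok_inv[simp]: "ok (fg_inv a) \<longleftrightarrow> ok a"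
  by (simp add: ok_def)
lemma ok_Nil[simp]: "ok []" by (simp add: ok_def)
lemma ok_reduce: "ok a \<Longrightarrow> ok (reduce a)"
  unfolding ok_def using letters_reduce[of a] by blast

lemma Dk_red: "Dk k u \<Longrightarrow> reduce u = reduce u' \<Longrightarrow> Dk k u'"
  by (auto simp: Dk_def)

lemma Dk_mono: "Dk k u \<Longrightarrow> k \<le> k' \<Longrightarrow> Dk k' u"
  by (force simp: Dk_def)

lemma Dk_nil: "reduce u = [] \<Longrightarrow> Dk k u"
  unfolding Dk_def by (rule exI[of _ "[]"]) (simp add: valid_def prodc_def)

lemma Dk_app: "Dk a u \<Longrightarrow> Dk b v \<Longrightarrow> Dk (a + b) (u @ v)"
proof -
  assume "Dk a u" "Dk b v"
  then obtain c1 c2 where c: "length c1 \<le> a" "valid c1" "reduce (prodc c1) = reduce u"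
    "length c2 \<le> b" "valid c2" "reduce (prodc c2) = reduce v"
    by (auto simp: Dk_def)
  have "reduce (prodc (c1 @ c2)) = reduce (u @ v)"
    using reduce_cong2[OF c(3) c(6)] by (simp add: prodc_def)
  moreover have "valid (c1 @ c2)" using c by (auto simp: valid_def)
  ultimately show ?thesis using c unfolding Dk_def
    by (intro exI[of _ "c1 @ c2"]) auto
qed

lemma prodc_conj:
  "reduce (prodc (map (\<lambda>(g, \<rho>). (reduce (h @ g), \<rho>)) cs)) = reduce (h @ prodc cs @ fg_inv h)"
proof (induction cs)
  case Nil then show ?case by (simp add: prodc_def)
next
  case (Cons c cs)
  obtain g \<rho> where c: "c = (g, \<rho>)" by (cases c)
  let ?P = "prodc (map (\<lambda>(g, \<rho>). (reduce (h @ g), \<rho>)) cs)"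
  have "reduce (prodc (map (\<lambda>(g, \<rho>). (reduce (h @ g), \<rho>)) (c # cs)))
      = reduce (reduce (h @ g) @ \<rho> @ fg_inv (reduce (h @ g)) @ ?P)"
    by (simp add: prodc_def c)
  also have "\<dots> = reduce (h @ g @ \<rho> @ fg_inv g @ fg_inv h @ ?P)"
    using reduce_inv_red[of "h @ g @ \<rho>" "h @ g" ?P] by simp
  also have "\<dots> = reduce (h @ g @ \<rho> @ fg_inv g @ fg_inv h @ reduce ?P)" by (simp only: fgs)
  also have "\<dots> = reduce (h @ g @ \<rho> @ fg_inv g @ fg_inv h @ reduce (h @ prodc cs @ fg_inv h))"
    using Cons by simp
  also have "\<dots> = reduce (h @ g @ \<rho> @ fg_inv g @ prodc cs @ fg_inv h)"
    by (simp only: fgs)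
  also have "\<dots> = reduce (h @ prodc (c # cs) @ fg_inv h)" by (simp add: prodc_def c)
  finally show ?case .
qed

lemma Dk_conj: "Dk k u \<Longrightarrow> ok h \<Longrightarrow> Dk k (h @ u @ fg_inv h)"
proof -
  assume "Dk k u" "ok h"
  then obtain cs where c: "length cs \<le> k" "valid cs" "reduce (prodc cs) = reduce u"
    by (auto simp: Dk_def)
  let ?cs = "map (\<lambda>(g, \<rho>). (reduce (h @ g), \<rho>)) cs"
  have "valid ?cs"
  proof -
    { fix g \<rho> assume "(g, \<rho>) \<in> set cs"
      then have "ok g" using c(2) by (auto simp: valid_def in_free_def ok_def)
      then have "ok (reduce (h @ g))" using \<open>ok h\<close> by (intro ok_reduce) simp }
    then show ?thesis using c(2) by (auto simp: valid_def in_free_def ok_def)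
  qed
  moreover have "reduce (prodc ?cs) = reduce (h @ u @ fg_inv h)"
    using prodc_conj[of h cs] reduce_cong3[OF c(3), of h "fg_inv h"] by simp
  ultimately show ?thesis using c(1) unfolding Dk_def by (intro exI[of _ ?cs]) auto
qed

lemma prodc_inv:
  "fg_inv (prodc cs) = prodc (map (\<lambda>(g, \<rho>). (g, fg_inv \<rho>)) (rev cs))"
  by (induction cs) (auto simp: prodc_def)

lemma Dk_inv: "Dk k u \<Longrightarrow> Dk k (fg_inv u)"
proof -
  assume "Dk k u"
  then obtain cs where c: "length cs \<le> k" "valid cs" "reduce (prodc cs) = reduce u"
    by (auto simp: Dk_def)
  let ?cs = "map (\<lambda>(g, \<rho>). (g, fg_inv \<rho>)) (rev cs)"
  have "valid ?cs"
    using c(2) by (auto simp: valid_def)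
  moreover have "reduce (prodc ?cs) = reduce (fg_inv u)"
    using prodc_inv[of cs] reduce_inv_cong[OF c(3)] by simp
  ultimately show ?thesis using c(1) unfolding Dk_def by (intro exI[of _ ?cs]) auto
qed

lemma Dk_rel: "\<rho> \<in> Rel n r \<Longrightarrow> Dk 1 \<rho>"
  unfolding Dk_def
  by (rule exI[of _ "[([], \<rho>)]"]) (simp add: valid_def prodc_def in_free_def)

lemma Area_le: "Dk k u \<Longrightarrow> Area n r u \<le> enat k"
proof -
  assume "Dk k u"
  then obtain cs where c: "length cs \<le> k" "valid cs" "reduce (prodc cs) = reduce u"
    by (auto simp: Dk_def)
  have aw: "area_witness n r u cs"
    using c by (simp add: area_witness_def valid_def prodc_def)
  then have "(LEAST N. \<exists>cs. area_witness n r u cs \<and> length cs = N) \<le> length cs"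
    by (intro Least_le) auto
  then show ?thesis using aw c(1) unfolding Area_def by auto
qed

definition rel :: "nat \<Rightarrow> (nat \<times> nat) word \<Rightarrow> (nat \<times> nat) word \<Rightarrow> bool" where
  "rel k u u' \<longleftrightarrow> Dk k (u @ fg_inv u')"

definition cm :: "(nat \<times> nat) word \<Rightarrow> (nat \<times> nat) word \<Rightarrow> bool" where
  "cm x y \<longleftrightarrow> Dk 1 (x @ y @ fg_inv x @ fg_inv y)"

lemma rel_free: "reduce u = reduce u' \<Longrightarrow> rel k u u'"
  unfolding rel_def
  by (rule Dk_nil) (metis append_Nil2 reduce_Nil reduce_app_red1 reduce_right_inv reduce_cong2)

lemma rel_refl: "rel k u u"
  by (rule rel_free) simp

lemma rel_mono: "rel k u u' \<Longrightarrow> k \<le> k' \<Longrightarrow> rel k' u u'"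
  unfolding rel_def by (rule Dk_mono)

lemma rel_sym: "rel k u u' \<Longrightarrow> rel k u' u"
  unfolding rel_def using Dk_inv by fastforce

lemma rel_trans: "rel a u u' \<Longrightarrow> rel b u' u'' \<Longrightarrow> rel (a + b) u u''"
  unfolding rel_def
  by (rule Dk_red[OF Dk_app], assumption, assumption)
     (simp add: reduce_cancel2[of u u' "fg_inv u''"])

lemma rel_cong: "rel k u u' \<Longrightarrow> ok p \<Longrightarrow> rel k (p @ u @ q) (p @ u' @ q)"
  unfolding rel_def
  by (drule Dk_conj, assumption) (erule Dk_red, simp only: fgs append_assoc)

lemma rel_congL: "rel k u u' \<Longrightarrow> rel k (u @ q) (u' @ q)"
  using rel_cong[of k u u' "[]" q] by simp

lemma rel_congR: "rel k u u' \<Longrightarrow> ok p \<Longrightarrow> rel k (p @ u) (p @ u')"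
  using rel_cong[of k u u' p "[]"] by simp

lemma rel_inv: "rel k u u' \<Longrightarrow> ok u \<Longrightarrow> rel k (fg_inv u) (fg_inv u')"
  unfolding rel_def
  apply (drule Dk_inv)
  apply (drule Dk_conj[of _ _ "fg_inv u"], simp)
  apply (erule Dk_red)
  apply (simp only: fgs append_assoc)
  done

lemma cm_rel: "cm x y \<Longrightarrow> rel 1 (x @ y) (y @ x)"
  by (simp add: cm_def rel_def)

lemma cm_sym: "cm x y \<Longrightarrow> cm y x"
  unfolding cm_def by (drule Dk_inv) simp

lemma cm_red: "cm x y \<Longrightarrow> reduce x = reduce x' \<Longrightarrow> reduce y = reduce y' \<Longrightarrow> cm x' y'"
  unfolding cm_def
  apply (erule Dk_red)
  apply (rule reduce_cong2, assumption)
  apply (rule reduce_cong2, assumption)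
  apply (rule reduce_cong2)
   apply (erule reduce_inv_cong)
  apply (erule reduce_inv_cong)
  done

lemma cm_invL: "cm x y \<Longrightarrow> ok x \<Longrightarrow> cm (fg_inv x) y"
  unfolding cm_def
  apply (drule Dk_conj[of _ _ "fg_inv x"], simp)
  apply (drule Dk_inv)
  apply (erule Dk_red)
  apply (simp only: fgs append_assoc)
  done

end



definition blk :: "(nat \<Rightarrow> 'b word) \<Rightarrow> nat \<times> bool \<Rightarrow> 'b word" where
  "blk S = (\<lambda>(i, b). if b then fg_inv (S i) else S i)"

definition psub :: "(nat \<Rightarrow> 'b word) \<Rightarrow> nat word \<Rightarrow> 'b word" where
  "psub S w = concat (map (blk S) w)"

lemma subst_psub: "subst S w = reduce (psub S w)"
  by (simp add: subst_def psub_def blk_def)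

lemma psub_Nil[simp]: "psub S [] = []" by (simp add: psub_def)
lemma psub_Cons[simp]: "psub S (l # w) = blk S l @ psub S w" by (simp add: psub_def)
lemma psub_append[simp]: "psub S (a @ b) = psub S a @ psub S b" by (simp add: psub_def)

lemma blk_inv: "blk S (inv_letter l) = fg_inv (blk S l)"
  by (cases l) (simp add: blk_def inv_letter_def)

lemma psub_inv: "fg_inv (psub S w) = psub S (fg_inv w)"
  by (induction w) (simp_all add: fg_inv_Cons blk_inv)

lemma length_fg_inv[simp]: "length (fg_inv w) = length w"
  by (simp add: fg_inv_def)

lemma letters_Cons: "letters (l # w) = insert (fst l) (letters w)"
  by (simp add: letters_def)

definition comm :: "'a word \<Rightarrow> 'a word \<Rightarrow> 'a word" where
  "comm a b = a @ b @ fg_inv a @ fg_inv b"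

lemma reduce_psub_cong:
  "(\<And>j. j \<in> letters w \<Longrightarrow> reduce (S j) = reduce (S' j)) \<Longrightarrow> reduce (psub S w) = reduce (psub S' w)"
proof (induction w)
  case (Cons l w)
  obtain j b where l: "l = (j, b)" by (cases l)
  have "reduce (blk S l) = reduce (blk S' l)"
    using Cons.prems[of j] l by (auto simp: blk_def letters_Cons intro: reduce_inv_cong)
  moreover have "reduce (psub S w) = reduce (psub S' w)"
    using Cons by (auto simp: letters_Cons)
  ultimately show ?case unfolding psub_Cons by (rule reduce_cong2)
qed simp

context fixes n r :: nat begin

lemma ok_concat: "(\<And>y. y \<in> set ys \<Longrightarrow> ok n r y) \<Longrightarrow> ok n r (concat ys)"
  by (induction ys) auto

lemma ok_psub: "(\<And>j. j \<in> letters w \<Longrightarrow> ok n r (S j)) \<Longrightarrow> ok n r (psub S w)"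
  by (induction w) (auto simp: blk_def letters_Cons split: prod.splits)

lemma cm_invR: "cm n r x y \<Longrightarrow> ok n r y \<Longrightarrow> cm n r x (fg_inv y)"
  by (rule cm_sym, rule cm_invL, rule cm_sym)

lemma cm_list1:
  "(\<And>y. y \<in> set ys \<Longrightarrow> cm n r x y \<and> ok n r y) \<Longrightarrow> ok n r x \<Longrightarrow>
   rel n r (length ys) (x @ concat ys) (concat ys @ x)"
proof (induction ys)
  case Nil then show ?case by (simp add: rel_refl)
next
  case (Cons y ys)
  have 1: "rel n r 1 (x @ y @ concat ys) (y @ x @ concat ys)"
    using rel_congL[OF cm_rel[of n r x y], of "concat ys"] Cons.prems by simp
  have 2: "rel n r (length ys) (y @ x @ concat ys) (y @ concat ys @ x)"
    using rel_congR[OF Cons.IH] Cons.prems by simp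
  show ?case using rel_trans[OF 1 2] by simp
qed

lemma cm_list:
  "(\<And>x y. x \<in> set xs \<Longrightarrow> y \<in> set ys \<Longrightarrow> cm n r x y) \<Longrightarrow>
   (\<And>x. x \<in> set xs \<Longrightarrow> ok n r x) \<Longrightarrow> (\<And>y. y \<in> set ys \<Longrightarrow> ok n r y) \<Longrightarrow>
   rel n r (length xs * length ys) (concat xs @ concat ys) (concat ys @ concat xs)"
proof (induction xs)
  case Nil then show ?case by (simp add: rel_refl)
next
  case (Cons x xs)
  have 1: "rel n r (length xs * length ys) (x @ concat xs @ concat ys) (x @ concat ys @ concat xs)"
    using rel_congR[OF Cons.IH] Cons.prems by simp
  have 2: "rel n r (length ys) (x @ concat ys @ concat xs) (concat ys @ x @ concat xs)"
    using rel_congL[OF cm_list1[of ys x], of "concat xs"] Cons.prems by simp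
  show ?case using rel_trans[OF 1 2] by (simp add: add.commute)
qed

definition H :: "(nat \<Rightarrow> (nat \<times> nat) word) \<Rightarrow> (nat \<Rightarrow> (nat \<times> nat) word) \<Rightarrow> bool" where
  "H E D \<longleftrightarrow> (\<forall>j\<in>{1..r}. \<forall>k\<in>{1..r}. cm n r (E j) (D k) \<and> ok n r (E j) \<and> ok n r (D k))"

lemma H_blk:
  assumes "H E D" "fst l \<in> {1..r}" "fst l' \<in> {1..r}"
  shows "cm n r (blk E l) (blk D l')" "ok n r (blk E l)" "ok n r (blk D l')"
proof -
  obtain j b where l: "l = (j, b)" by (cases l)
  obtain k c where l': "l' = (k, c)" by (cases l')
  have h: "cm n r (E j) (D k)" "ok n r (E j)" "ok n r (D k)"
    using assms l l' by (auto simp: H_def)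
  show "cm n r (blk E l) (blk D l')"
    using h by (auto simp: blk_def l l' intro: cm_invL cm_invR)
  show "ok n r (blk E l)" "ok n r (blk D l')" using h by (auto simp: blk_def l l')
qed

lemma ok_psubH1: "H E D \<Longrightarrow> letters w \<subseteq> {1..r} \<Longrightarrow> ok n r (psub E w)"
  by (rule ok_psub) (auto simp: H_def)
lemma ok_psubH2: "H E D \<Longrightarrow> letters w \<subseteq> {1..r} \<Longrightarrow> ok n r (psub D w)"
  by (rule ok_psub) (auto simp: H_def)
lemma ok_psubH3: "H E D \<Longrightarrow> letters w \<subseteq> {1..r} \<Longrightarrow> ok n r (psub (\<lambda>j. E j @ D j) w)"
  by (rule ok_psub) (auto simp: H_def)

lemma shuffle:
  assumes "H E D"
  shows "letters w \<subseteq> {1..r} \<Longrightarrow>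
    rel n r (length w * length w) (psub (\<lambda>j. E j @ D j) w) (psub E w @ psub D w)"
proof (induction w)
  case Nil then show ?case by (simp add: rel_refl)
next
  case (Cons l w)
  obtain j b where l: "l = (j, b)" by (cases l)
  have lw: "letters w \<subseteq> {1..r}" "fst l \<in> {1..r}" using Cons.prems by (auto simp: letters_Cons)
  note hb = H_blk[OF assms lw(2) lw(2)]
  have 1: "rel n r 1 (blk (\<lambda>j. E j @ D j) l) (blk E l @ blk D l)"
  proof (cases b)
    case True
    have "cm n r (fg_inv (D j)) (fg_inv (E j))"
      using hb(1) by (simp add: blk_def l True cm_sym)
    then show ?thesis using cm_rel by (simp add: blk_def l True)
  next
    case False
    then show ?thesis by (simp add: blk_def l rel_refl)
  qed
  have okb: "ok n r (blk E l @ blk D l)" using hb by simp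
  have 2: "rel n r (length w * length w) (blk E l @ blk D l @ psub (\<lambda>j. E j @ D j) w)
                                       (blk E l @ blk D l @ psub E w @ psub D w)"
    using rel_congR[OF Cons.IH[OF lw(1)] okb] by simp
  have c: "rel n r (length (map (blk E) w)) (blk D l @ concat (map (blk E) w)) (concat (map (blk E) w) @ blk D l)"
  proof (rule cm_list1)
    fix y assume "y \<in> set (map (blk E) w)"
    then obtain l' where l': "l' \<in> set w" "y = blk E l'" by auto
    have "fst l' \<in> {1..r}" using l' lw(1) by (auto simp: letters_def)
    then have "cm n r (blk E l') (blk D l)" "ok n r (blk E l')"
      using H_blk[OF assms _ lw(2)] by auto
    then show "cm n r (blk D l) y \<and> ok n r y"
      using l' cm_sym by auto
  qed (use hb in simp)
  have 3: "rel n r (length w) (blk E l @ blk D l @ psub E w @ psub D w)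
                             (blk E l @ psub E w @ blk D l @ psub D w)"
    using rel_cong[OF c, of "blk E l" "psub D w"] hb by (simp add: psub_def)
  have s1: "rel n r 1 (blk (\<lambda>j. E j @ D j) l @ psub (\<lambda>j. E j @ D j) w)
       (blk E l @ blk D l @ psub (\<lambda>j. E j @ D j) w)"
    using rel_congL[OF 1, of "psub (\<lambda>j. E j @ D j) w"] by simp
  have fin: "rel n r (1 + length w * length w + length w) (psub (\<lambda>j. E j @ D j) (l # w))
      (psub E (l # w) @ psub D (l # w))"
    using rel_trans[OF rel_trans[OF s1 2] 3] by simp
  show ?case by (rule rel_mono[OF fin]) simp
qed

lemma key:
  assumes "H E D" "letters w \<subseteq> {1..r}" "letters v \<subseteq> {1..r}"
  shows "rel n r (4 * length w * length w + length w * length v)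
     (comm (psub (\<lambda>j. E j @ D j) w) (psub D v)) (comm (psub D w) (psub D v))"
proof -
  let ?A = "psub (\<lambda>j. E j @ D j) w" and ?E = "psub E w" and ?D = "psub D w" and ?V = "psub D v"
  have okA: "ok n r ?A" "ok n r ?E" "ok n r ?D" "ok n r ?V"
    using assms ok_psubH1 ok_psubH2 ok_psubH3 by auto
  have s1: "rel n r (length w * length w) ?A (?E @ ?D)" by (rule shuffle[OF assms(1,2)])
  have s2: "rel n r (length w * length w) (fg_inv ?A) (fg_inv (?E @ ?D))"
    by (rule rel_inv[OF s1 okA(1)])
  have t1: "rel n r (length w * length w) (comm ?A ?V) (?E @ ?D @ ?V @ fg_inv ?A @ fg_inv ?V)"
    using rel_congL[OF s1, of "?V @ fg_inv ?A @ fg_inv ?V"] by (simp add: comm_def)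
  have t2: "rel n r (length w * length w) (?E @ ?D @ ?V @ fg_inv ?A @ fg_inv ?V)
       (?E @ ?D @ ?V @ fg_inv ?D @ fg_inv ?E @ fg_inv ?V)"
    using rel_cong[OF s2, of "?E @ ?D @ ?V" "fg_inv ?V"] okA by simp
  let ?M = "?D @ ?V @ fg_inv ?D"
  have M: "?M = concat (map (blk D) (w @ v @ fg_inv w))"
    using psub_inv[of D w] by (simp add: psub_def)
  have lfi: "letters (fg_inv w) \<subseteq> {1..r}" using assms(2) by simp
  have c: "rel n r (length (map (blk E) w) * length (map (blk D) (w @ v @ fg_inv w)))
      (concat (map (blk E) w) @ concat (map (blk D) (w @ v @ fg_inv w)))
      (concat (map (blk D) (w @ v @ fg_inv w)) @ concat (map (blk E) w))"
  proof (rule cm_list)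
    fix x y assume "x \<in> set (map (blk E) w)" "y \<in> set (map (blk D) (w @ v @ fg_inv w))"
    then obtain l l' where "l \<in> set w" "x = blk E l" "l' \<in> set (w @ v @ fg_inv w)" "y = blk D l'"
      by auto
    moreover have "fst l \<in> {1..r}" "fst l' \<in> {1..r}"
      using calculation assms(2,3) lfi by (auto simp: letters_def)
    ultimately show "cm n r x y" using H_blk[OF assms(1)] by auto
  next
    fix x assume "x \<in> set (map (blk E) w)"
    then obtain l where "l \<in> set w" "x = blk E l" by auto
    moreover have "fst l \<in> {1..r}" using calculation assms(2) by (auto simp: letters_def)
    ultimately show "ok n r x" using H_blk[OF assms(1)] by auto
  next
    fix y assume "y \<in> set (map (blk D) (w @ v @ fg_inv w))"
    then obtain l' where "l' \<in> set (w @ v @ fg_inv w)" "y = blk D l'" by auto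
    moreover have "fst l' \<in> {1..r}"
      using calculation assms(2,3) lfi by (auto simp: letters_def)
    ultimately show "ok n r y" using H_blk[OF assms(1)] by (auto simp: H_def)
  qed
  have t3: "rel n r (length w * (length w + length v + length w))
       (?E @ ?D @ ?V @ fg_inv ?D @ fg_inv ?E @ fg_inv ?V)
       (?D @ ?V @ fg_inv ?D @ ?E @ fg_inv ?E @ fg_inv ?V)"
    using rel_congL[OF c, of "fg_inv ?E @ fg_inv ?V"] M by (simp add: psub_def add.assoc)
  have t4: "rel n r 0 (?D @ ?V @ fg_inv ?D @ ?E @ fg_inv ?E @ fg_inv ?V) (comm ?D ?V)"
    by (rule rel_free) (simp only: comm_def fgs append_assoc)
  have "rel n r (length w * length w + length w * length w + length w * (length w + length v + length w) + 0)
     (comm ?A ?V) (comm ?D ?V)"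
    by (rule rel_trans[OF rel_trans[OF rel_trans[OF t1 t2] t3] t4])
  then show ?thesis by (rule rel_mono) (simp add: algebra_simps)
qed

end



lemma comm_cong: "reduce a = reduce a' \<Longrightarrow> reduce b = reduce b' \<Longrightarrow> reduce (comm a b) = reduce (comm a' b')"
  unfolding comm_def
  by (intro reduce_cong2 reduce_inv_cong) auto

definition ex1 :: "nat \<Rightarrow> nat \<times> bool \<Rightarrow> int" where
  "ex1 i l = (if fst l = i then (if snd l then -1 else 1) else 0)"

definition exps :: "nat \<Rightarrow> nat word \<Rightarrow> int" where
  "exps i w = sum_list (map (ex1 i) w)"

lemma exps_Nil[simp]: "exps i [] = 0" by (simp add: exps_def)
lemma exps_Cons[simp]: "exps i (l # w) = ex1 i l + exps i w" by (simp add: exps_def)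
lemma exps_append[simp]: "exps i (a @ b) = exps i a + exps i b" by (simp add: exps_def)
lemma ex1_inv[simp]: "ex1 i (inv_letter l) = - ex1 i l"
  by (simp add: ex1_def inv_letter_def)

lemma exps_red_cons: "exps i (red_cons l w) = exps i (l # w)"
  by (cases w) (auto simp: red_cons_def)

lemma exps_reduce[simp]: "exps i (reduce w) = exps i w"
  by (induction w) (simp_all add: reduce_Cons exps_red_cons)

lemma exps_inv[simp]: "exps i (fg_inv w) = - exps i w"
  by (induction w) (simp_all add: fg_inv_Cons)

lemma exps_comm_subgroup: "v \<in> comm_subgroup r \<Longrightarrow> exps i v = 0"
  by (induction rule: comm_subgroup.induct) (simp_all add: fg_comm_def fg_mult_def)

definition fpow :: "'a word \<Rightarrow> int \<Rightarrow> 'a word" where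
  "fpow f z = (if 0 \<le> z then concat (replicate (nat z) f) else concat (replicate (nat (-z)) (fg_inv f)))"

lemma fpow_A: "reduce (f @ fpow f z) = reduce (fpow f (z + 1))"
proof (cases "0 \<le> z")
  case True
  then have "nat (z + 1) = Suc (nat z)" by simp
  then show ?thesis using True by (simp add: fpow_def)
next
  case False
  then have e: "nat (-z) = Suc (nat (-(z+1)))" by simp
  have "fpow f z = fg_inv f @ concat (replicate (nat (-(z+1))) (fg_inv f))"
    using False e by (simp add: fpow_def)
  moreover have "fpow f (z + 1) = concat (replicate (nat (-(z+1))) (fg_inv f))"
    using False by (cases "z = -1") (auto simp: fpow_def)
  ultimately show ?thesis by simp
qed

lemma fpow_B: "reduce (fg_inv f @ fpow f z) = reduce (fpow f (z - 1))"
proof (cases "0 < z")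
  case True
  then have e: "nat z = Suc (nat (z - 1))" by simp
  have "fpow f z = f @ fpow f (z - 1)" using True e by (simp add: fpow_def)
  then show ?thesis by simp
next
  case False
  then have e: "nat (-(z - 1)) = Suc (nat (-z))" by simp
  have "fpow f (z - 1) = fg_inv f @ concat (replicate (nat (-z)) (fg_inv f))"
    using False e by (simp add: fpow_def)
  moreover have "fpow f z = concat (replicate (nat (-z)) (fg_inv f))"
    using False by (cases "z = 0") (auto simp: fpow_def)
  ultimately show ?thesis by simp
qed

lemma psub_single:
  "reduce (psub (\<lambda>j. if j = i then f else []) v) = reduce (fpow f (exps i v))"
proof (induction v)
  case Nil then show ?case by (simp add: fpow_def)
next
  case (Cons l v)
  obtain j b where l: "l = (j, b)" by (cases l)
  let ?S = "\<lambda>j. if j = i then f else []"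
  have IH': "reduce (x @ psub ?S v) = reduce (x @ fpow f (exps i v))" for x
    using reduce_cong2[OF refl Cons.IH, of x] .
  show ?case
  proof (cases "j = i")
    case False
    then show ?thesis using Cons.IH by (simp add: l blk_def ex1_def)
  next
    case True
    show ?thesis
    proof (cases b)
      case b: True
      have "reduce (psub ?S (l # v)) = reduce (fg_inv f @ fpow f (exps i v))"
        using IH'[of "fg_inv f"] by (simp add: l blk_def True b)
      also have "\<dots> = reduce (fpow f (exps i (l # v)))"
        by (simp add: fpow_B l ex1_def True b)
      finally show ?thesis .
    next
      case b: False
      have "reduce (psub ?S (l # v)) = reduce (f @ fpow f (exps i v))"
        using IH'[of f] by (simp add: l blk_def True b)
      also have "\<dots> = reduce (fpow f (exps i (l # v)))"
        by (simp add: fpow_A l ex1_def True b add.commute)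
      finally show ?thesis .
    qed
  qed
qed

context fixes n r :: nat begin

lemma ok_xg[simp]: "ok n r (xg \<alpha> j) \<longleftrightarrow> \<alpha> \<in> {1..n-1} \<and> j \<in> {1..r}"
  by (simp add: ok_def xg_def letters_def Xgens_def)

lemma RA:
  assumes "\<alpha> \<in> {1..n-1}" "\<beta> \<in> {1..n-1}" "j \<in> {1..r}" "\<alpha> \<noteq> \<beta>"
  shows "cm n r (xg \<alpha> j) (xg \<beta> j)"
proof -
  have "fg_comm (xg \<alpha> j) (xg \<beta> j) \<in> Rel n r"
    using assms unfolding Rel_def R1_def by blast
  then have "Dk n r 1 (fg_comm (xg \<alpha> j) (xg \<beta> j))" by (rule Dk_rel)
  then show ?thesis unfolding cm_def fg_comm_def by (rule Dk_red) simp
qed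

lemma RB:
  assumes "\<alpha> \<in> {1..n-1}" "\<beta> \<in> {1..n-1}" "\<gamma> \<in> {1..n-1}" "i \<in> {1..r}" "j \<in> {1..r}"
    "i \<noteq> j" "\<alpha> \<noteq> \<beta>" "\<alpha> \<noteq> \<gamma>" "\<beta> \<noteq> \<gamma>"
  shows "cm n r (xg \<alpha> i) (xg \<beta> j @ fg_inv (xg \<gamma> j))"
proof -
  have "fg_comm (xg \<alpha> i) (fg_mult (xg \<beta> j) (fg_inv (xg \<gamma> j))) \<in> Rel n r"
    using assms unfolding Rel_def R2_def by blast
  then have "Dk n r 1 (fg_comm (xg \<alpha> i) (fg_mult (xg \<beta> j) (fg_inv (xg \<gamma> j))))" by (rule Dk_rel)
  then show ?thesis unfolding cm_def fg_comm_def fg_mult_def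
    by (rule Dk_red) (simp only: fgs append_assoc)
qed

lemma cm_sub: "cm n r a b \<Longrightarrow> cm n r (a @ fg_inv b) b"
  unfolding cm_def by (erule Dk_red) (simp only: fgs append_assoc)

lemma cm_nil: "cm n r [] y"
  unfolding cm_def by (rule Dk_nil) simp

lemma rel_comm_right:
  assumes "rel n r k V V'" "ok n r W" "ok n r V" "ok n r V'"
  shows "rel n r (k + k) (comm W V) (comm W V')"
proof -
  have 1: "rel n r k (W @ V @ fg_inv W @ fg_inv V) (W @ V' @ fg_inv W @ fg_inv V)"
    using rel_cong[OF assms(1) assms(2), of "fg_inv W @ fg_inv V"] by simp
  have 2: "rel n r k (W @ V' @ fg_inv W @ fg_inv V) (W @ V' @ fg_inv W @ fg_inv V')"
    using rel_congR[OF rel_inv[OF assms(1) assms(3)], of "W @ V' @ fg_inv W"] assms by simp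
  show ?thesis using rel_trans[OF 1 2] by (simp add: comm_def)
qed

lemma Dk_of_rel:
  "rel n r k (comm A V) (comm B V) \<Longrightarrow> reduce A = reduce A' \<Longrightarrow> reduce B = reduce B' \<Longrightarrow> reduce V = reduce V' \<Longrightarrow>
   Dk n r k (fg_mult (fg_comm A' V') (fg_inv (fg_comm B' V')))"
  unfolding rel_def
  apply (erule Dk_red)
  apply (simp only: fg_mult_def fg_comm_def)
  apply (simp only: reduce_app_red1 reduce_inv_red3 reduce_reduce)
  apply (unfold comm_def)
  apply (intro reduce_cong2 reduce_inv_cong; assumption)
  done

end



context fixes n r :: nat begin

lemma caseA:
  assumes nr: "n \<ge> r + 2" and i: "i \<in> {r+1..n-1}"
    and lw: "letters w \<subseteq> {1..r}" and lv: "letters v \<subseteq> {1..r}"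
  shows "Dk n r (4 * length w * length w + length w * length v)
     (fg_mult (fg_comm (subst (Xtuple i) w) (subst Delta v))
              (fg_inv (fg_comm (subst Delta w) (subst Delta v))))"
proof -
  let ?E = "\<lambda>j. xg i j @ fg_inv (xg j j)" and ?D = "\<lambda>j. xg j j"
  have H: "H n r ?E ?D"
    unfolding H_def
  proof (intro ballI conjI)
    fix j k assume j: "j \<in> {1..r}" and k: "k \<in> {1..r}"
    show "ok n r (?E j)" "ok n r (?D k)" using i j k nr by auto
    show "cm n r (?E j) (?D k)"
    proof (cases "k = j")
      case True
      then show ?thesis using i j nr by (auto intro!: cm_sub RA)
    next
      case False
      have "cm n r (xg k k) (xg i j @ fg_inv (xg j j))"
        using i j k nr False by (intro RB) auto
      then show ?thesis by (rule cm_sym)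
    qed
  qed
  have k: "rel n r (4 * length w * length w + length w * length v)
     (comm (psub (\<lambda>j. ?E j @ ?D j) w) (psub ?D v)) (comm (psub ?D w) (psub ?D v))"
    by (rule key[OF H lw lv])
  have e0: "reduce (psub (\<lambda>j. ?E j @ ?D j) w) = reduce (psub (Xtuple i) w)"
    by (rule reduce_psub_cong) (simp only: fgs append_assoc Xtuple_def)
  have e1: "reduce (psub (\<lambda>j. ?E j @ ?D j) w) = reduce (subst (Xtuple i) w)"
    using e0 by (simp add: subst_psub)
  have D: "Delta = ?D" by (simp add: Delta_def[abs_def])
  have e2: "reduce (psub ?D w) = reduce (subst Delta w)" "reduce (psub ?D v) = reduce (subst Delta v)"
    by (simp_all add: subst_psub D)
  show ?thesis
    by (rule Dk_of_rel[OF k e1 e2])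
qed

lemma caseB:
  assumes nr: "n \<ge> r + 2" and i: "i \<in> {1..r}"
    and lw: "letters w \<subseteq> {1..r}" and lv: "letters v \<subseteq> {1..r}"
    and vc: "v \<in> comm_subgroup r"
  shows "Dk n r ((length v * length v + length v * length v) +
                 (4 * length w * length w + length w * length v) +
                 (4 * length w * length w + length w * length v) +
                 (length v * length v + length v * length v))
     (fg_mult (fg_comm (subst (Xtuple i) w) (subst Delta v))
              (fg_inv (fg_comm (subst Delta w) (subst Delta v))))"
proof -
  define m where "m = r + 1"
  have m: "m \<in> {1..n-1}" "m \<noteq> i" "\<And>j. j \<in> {1..r} \<Longrightarrow> m \<noteq> j"
    using nr i by (auto simp: m_def)
  define D' where "D' = (\<lambda>k. if k = i then xg m i else xg k k)"
  define f where "f = xg i i @ fg_inv (xg m i)"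
  define E1 where "E1 = (\<lambda>j. xg i j @ fg_inv (D' j))"
  define E2 where "E2 = (\<lambda>j::nat. if j = i then f else [])"
  have rng: "\<And>j. j \<in> {1..r} \<Longrightarrow> j \<in> {1..n-1}" using nr by auto
  have iN: "i \<in> {1..n-1}" using rng i by blast
  have okD': "\<And>k. k \<in> {1..r} \<Longrightarrow> ok n r (D' k)" using m i rng by (auto simp: D'_def)
  have okf: "ok n r f" using m i iN by (simp add: f_def)
  have cf: "\<And>k. k \<in> {1..r} \<Longrightarrow> cm n r f (D' k)"
  proof -
    fix k assume k: "k \<in> {1..r}"
    show "cm n r f (D' k)"
    proof (cases "k = i")
      case True
      then show ?thesis unfolding f_def D'_def using m i iN by (auto intro!: cm_sub RA)
    next
      case False
      have "cm n r (xg k k) (xg i i @ fg_inv (xg m i))"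
        using False m i k iN rng by (intro RB) auto
      then show ?thesis unfolding f_def D'_def using False by (simp add: cm_sym)
    qed
  qed
  have H1: "H n r E1 D'"
    unfolding H_def
  proof (intro ballI conjI)
    fix j k assume j: "j \<in> {1..r}" and k: "k \<in> {1..r}"
    show "ok n r (E1 j)" using j i okD' rng by (simp add: E1_def)
    show "ok n r (D' k)" using okD' k by blast
    show "cm n r (E1 j) (D' k)"
    proof (cases "j = i")
      case True
      then have "E1 j = f" by (simp add: E1_def D'_def f_def)
      then show ?thesis using cf k by simp
    next
      case ji: False
      show ?thesis
      proof (cases "k = i")
        case True
        have "cm n r (xg m i) (xg i j @ fg_inv (xg j j))"
          using ji m i j iN rng by (intro RB) auto
        then show ?thesis using True ji by (simp add: E1_def D'_def cm_sym)
      next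
        case ki: False
        show ?thesis
        proof (cases "k = j")
          case True
          then show ?thesis using ji ki j iN rng by (auto simp: E1_def D'_def intro!: cm_sub RA)
        next
          case False
          have "cm n r (xg k k) (xg i j @ fg_inv (xg j j))"
            using False ji ki i j k iN rng by (intro RB) auto
          then show ?thesis using ji ki by (simp add: E1_def D'_def cm_sym)
        qed
      qed
    qed
  qed
  have H2: "H n r E2 D'"
    unfolding H_def
  proof (intro ballI conjI)
    fix j k assume j: "j \<in> {1..r}" and k: "k \<in> {1..r}"
    show "ok n r (E2 j)" using okf by (simp add: E2_def)
    show "ok n r (D' k)" using okD' k by blast
    show "cm n r (E2 j) (D' k)" using cf[OF k] by (simp add: E2_def cm_nil)
  qed
  let ?W = "psub (\<lambda>j. E1 j @ D' j) w" and ?W' = "psub (\<lambda>j. E2 j @ D' j) w"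
  let ?V = "psub (\<lambda>j. E2 j @ D' j) v" and ?V' = "psub D' v" and ?P = "psub D' w"
  have sh: "rel n r (length v * length v) ?V (psub E2 v @ ?V')"
    by (rule shuffle[OF H2 lv])
  have z: "reduce (psub E2 v) = []"
    using psub_single[of i f v] exps_comm_subgroup[OF vc, of i] by (simp add: E2_def fpow_def)
  have "reduce (psub E2 v @ ?V') = reduce ([] @ ?V')"
    by (rule reduce_cong2) (simp_all add: z)
  then have "rel n r 0 (psub E2 v @ ?V') ?V'" by (intro rel_free) simp
  then have VV: "rel n r (length v * length v) ?V ?V'" using rel_trans[OF sh] by fastforce
  have okW: "ok n r ?W" by (rule ok_psubH3[OF H1 lw])
  have okW': "ok n r ?W'" by (rule ok_psubH3[OF H2 lw])
  have okV: "ok n r ?V" by (rule ok_psubH3[OF H2 lv])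
  have okV': "ok n r ?V'" by (rule ok_psubH2[OF H2 lv])
  have c1: "rel n r (length v * length v + length v * length v) (comm ?W ?V) (comm ?W ?V')"
    by (rule rel_comm_right[OF VV okW okV okV'])
  have c2: "rel n r (4 * length w * length w + length w * length v) (comm ?W ?V') (comm ?P ?V')"
    by (rule key[OF H1 lw lv])
  have c3: "rel n r (4 * length w * length w + length w * length v) (comm ?P ?V') (comm ?W' ?V')"
    by (rule rel_sym, rule key[OF H2 lw lv])
  have c4: "rel n r (length v * length v + length v * length v) (comm ?W' ?V') (comm ?W' ?V)"
    by (rule rel_sym, rule rel_comm_right[OF VV okW' okV okV'])
  have k: "rel n r ((length v * length v + length v * length v) +
                 (4 * length w * length w + length w * length v) +
                 (4 * length w * length w + length w * length v) +
                 (length v * length v + length v * length v)) (comm ?W ?V) (comm ?W' ?V)"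
    by (rule rel_trans[OF rel_trans[OF rel_trans[OF c1 c2] c3] c4])
  have D: "Delta = (\<lambda>j. xg j j)" by (simp add: Delta_def[abs_def])
  have ED2: "reduce (E2 j @ D' j) = reduce (Delta j)" for j
    by (cases "j = i") (simp_all only: E2_def D'_def f_def D fgs append_assoc if_True if_False simp_thms)
  have e1: "reduce ?W = reduce (subst (Xtuple i) w)"
    unfolding subst_psub reduce_reduce
    by (rule reduce_psub_cong) (simp only: E1_def fgs append_assoc Xtuple_def)
  have e2: "reduce ?W' = reduce (subst Delta w)" "reduce ?V = reduce (subst Delta v)"
    unfolding subst_psub reduce_reduce
    by (rule reduce_psub_cong, rule ED2)+
  show ?thesis
    by (rule Dk_of_rel[OF k e1 e2])
qed

end



lemma final_bound:
  assumes "Dk n r k u" "real k \<le> C"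
  shows "ereal_of_enat (Area n r u) \<le> ereal C"
proof -
  have "Area n r u \<le> enat k" by (rule Area_le[OF assms(1)])
  then have "ereal_of_enat (Area n r u) \<le> ereal_of_enat (enat k)" by (subst ereal_of_enat_le_iff)
  also have "\<dots> = ereal (real k)" by simp
  also have "\<dots> \<le> ereal C" using assms(2) by simp
  finally show ?thesis .
qed

lemma prod_le_max: "(a::nat) * b \<le> max (a^2) (b^2)"
proof (cases "a \<le> b")
  case True
  then have "a * b \<le> b * b" by (simp add: mult_right_mono)
  then show ?thesis by (metis le_max_iff_disj power2_eq_square)
next
  case False
  then have "a * b \<le> a * a" by simp
  then show ?thesis by (metis le_max_iff_disj power2_eq_square)
qed

theorem lemma3p13:
  fixes n r :: nat
  assumes "n \<ge> r + 2" and "r + 2 \<ge> 2"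
  shows "\<exists>C::real. C > 0 \<and>
    (\<forall>v w i. v \<in> Fr r \<longrightarrow> w \<in> Fr r \<longrightarrow> i \<in> {1..n-1} \<longrightarrow>
       (v \<in> comm_subgroup r \<or> i \<in> {r+1..n-1}) \<longrightarrow>
       ereal_of_enat (Area n r
          (fg_mult (fg_comm (subst (Xtuple i) w) (subst Delta v))
                   (fg_inv (fg_comm (subst Delta w) (subst Delta v)))))
       \<le> ereal (C * real (max ((length w)^2) ((length v)^2))))"
proof (intro exI[of _ 14] conjI allI impI)
  fix v w i
  assume v: "v \<in> Fr r" and w: "w \<in> Fr r" and i: "i \<in> {1..n-1}"
    and c: "v \<in> comm_subgroup r \<or> i \<in> {r+1..n-1}"
  have lv: "letters v \<subseteq> {1..r}" and lw: "letters w \<subseteq> {1..r}"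
    using v w by (auto simp: Fr_def in_free_def)
  let ?M = "max ((length w)^2) ((length v)^2)"
  have ww: "length w * length w \<le> ?M" using prod_le_max[of "length w" "length w"] by simp
  have vv: "length v * length v \<le> ?M" using prod_le_max[of "length v" "length v"] by simp
  have wv: "length w * length v \<le> ?M" using prod_le_max[of "length w" "length v"] by simp
  show "ereal_of_enat (Area n r
          (fg_mult (fg_comm (subst (Xtuple i) w) (subst Delta v))
                   (fg_inv (fg_comm (subst Delta w) (subst Delta v)))))
       \<le> ereal (14 * real ?M)"
  proof (cases "i \<in> {r+1..n-1}")
    case True
    note d = caseA[OF assms(1) True lw lv]
    show ?thesis
    proof (rule final_bound[OF d])
      have "4 * length w * length w + length w * length v \<le> 14 * ?M" (is "?X \<le> _") using ww wv unfolding mult.assoc by linarith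
      note le = this
      show "real (4 * length w * length w + length w * length v) \<le> 14 * real ?M"
        using of_nat_mono[OF le, where 'a=real] by simp
    qed
  next
    case False
    then have ir: "i \<in> {1..r}" and vc: "v \<in> comm_subgroup r" using i c by auto
    note d = caseB[OF assms(1) ir lw lv vc]
    show ?thesis
    proof (rule final_bound[OF d])
      have "(length v * length v + length v * length v) +
                 (4 * length w * length w + length w * length v) +
                 (4 * length w * length w + length w * length v) +
                 (length v * length v + length v * length v) \<le> 14 * ?M" (is "?X \<le> _") using ww wv vv unfolding mult.assoc by linarith
      note le = this
      show "real ((length v * length v + length v * length v) +
                 (4 * length w * length w + length w * length v) +
                 (4 * length w * length w + length w * length v) +
                 (length v * length v + length v * length v)) \<le> 14 * real ?M"
        using of_nat_mono[OF le, where 'a=real] by simp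
    qed
  qed
qed simp


end
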